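(* Let $X$ and $Y$ be infinite sets with $|X| < |Y|$. Then: (i) every sequence of words that is universal for $I(X)$ is universal for $I(Y)$; (ii) if $2^{\aleph_0} < |X|$, then every sequence of words that is universal for $I(Y)$ is universal for $I(X)$. In particular, if $2^{\aleph_0} < |X| \leq |Y|$, then the sequences universal for $I(X)$ are exactly the sequences universal for $I(Y)$.
   Context: $I(X)$ denotes the symmetric inverse monoid on $X$: all partial permutations of $X$ (bijections between subsets of $X$) under composition of binary relations. For an alphabet $A$ (a finite or countable set), $A^+$ is the free semigroup of non-empty words over $A$. A sequence $w_1, w_2, \ldots \in A^+$ is universal for a semigroup $S$ if for every sequence $s_1, s_2, \ldots \in S$ there is a semigroup homomorphism $\phi: A^+ \to S$ with $(w_n)\phi = s_n$ for all $n \geq 1$. *)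

theory Defs
  imports Main "HOL-Library.Countable_Set"
begin

text \<open>The symmetric inverse monoid I(X): partial bijections between subsets of X,
  represented as partial maps with domain and range inside X, injective on their domain.\<close>
definition sym_inv :: "'a set \<Rightarrow> ('a \<rightharpoonup> 'a) set" where
  "sym_inv X = {f. dom f \<subseteq> X \<and> ran f \<subseteq> X \<and> inj_on f (dom f)}"

text \<open>Composition of binary relations, written left to right: first f, then g.\<close>
definition pcomp :: "('a \<rightharpoonup> 'a) \<Rightarrow> ('a \<rightharpoonup> 'a) \<Rightarrow> ('a \<rightharpoonup> 'a)" where
  "pcomp f g = g \<circ>\<^sub>m f"

text \<open>A semigroup homomorphism from the free semigroup A+ (nonempty lists over A,
  concatenation) into I(X).\<close>
definition word_hom :: "'c set \<Rightarrow> 'a set \<Rightarrow> ('c list \<Rightarrow> ('a \<rightharpoonup> 'a)) \<Rightarrow> bool" where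
  "word_hom A X \<phi> \<longleftrightarrow>
     (\<forall>w. w \<in> lists A \<and> w \<noteq> [] \<longrightarrow> \<phi> w \<in> sym_inv X) \<and>
     (\<forall>u v. u \<in> lists A \<and> u \<noteq> [] \<and> v \<in> lists A \<and> v \<noteq> [] \<longrightarrow>
        \<phi> (u @ v) = pcomp (\<phi> u) (\<phi> v))"

definition universal_for :: "'a set \<Rightarrow> 'c set \<Rightarrow> (nat \<Rightarrow> 'c list) \<Rightarrow> bool" where
  "universal_for X A w \<longleftrightarrow>
     (\<forall>n. w n \<in> lists A \<and> w n \<noteq> []) \<and>
     (\<forall>s. (\<forall>n. s n \<in> sym_inv X) \<longrightarrow>
        (\<exists>\<phi>. word_hom A X \<phi> \<and> (\<forall>n. \<phi> (w n) = s n)))"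

end

theory Submission
  imports Defs "HOL-Library.Countable_Set_Type"
begin
unbundle cardinal_syntax



definition struct :: "'a set \<Rightarrow> (nat \<Rightarrow> 'a \<rightharpoonup> 'a) \<Rightarrow> bool" where
  "struct Z s \<longleftrightarrow> (\<forall>n. s n \<in> sym_inv Z)"
definition realizes :: "'c set \<Rightarrow> (nat \<Rightarrow> 'c list) \<Rightarrow> 'a set \<Rightarrow> (nat \<Rightarrow> 'a \<rightharpoonup> 'a) \<Rightarrow> bool" where
  "realizes A w Z s \<longleftrightarrow> (\<exists>\<phi>. word_hom A Z \<phi> \<and> (\<forall>n. \<phi> (w n) = s n))"
definition allreal :: "'c set \<Rightarrow> (nat \<Rightarrow> 'c list) \<Rightarrow> 'a set \<Rightarrow> bool" where
  "allreal A w Z \<longleftrightarrow> (\<forall>s. struct Z s \<longrightarrow> realizes A w Z s)"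

lemma universal_alt: "universal_for X A w \<longleftrightarrow> (\<forall>n. w n \<in> lists A \<and> w n \<noteq> []) \<and> allreal A w X"
  unfolding universal_for_def allreal_def struct_def realizes_def by blast

definition conjm :: "('a \<Rightarrow> 'b) \<Rightarrow> ('b \<Rightarrow> 'a) \<Rightarrow> 'b set \<Rightarrow> ('a \<rightharpoonup> 'a) \<Rightarrow> ('b \<rightharpoonup> 'b)" where
  "conjm h g Z' f = (\<lambda>y. if y \<in> Z' then map_option h (f (g y)) else None)"

definition minv :: "('a \<Rightarrow> 'b) \<Rightarrow> ('b \<Rightarrow> 'a) \<Rightarrow> 'a set \<Rightarrow> 'b set \<Rightarrow> bool" where
  "minv h g Z Z' \<longleftrightarrow> (\<forall>x\<in>Z. h x \<in> Z' \<and> g (h x) = x) \<and> (\<forall>y\<in>Z'. g y \<in> Z \<and> h (g y) = y)"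

lemma minv_sym: "minv h g Z Z' \<Longrightarrow> minv g h Z' Z"
  unfolding minv_def by blast

lemma sym_invD: assumes "f \<in> sym_inv Z"
  shows "f x = Some y \<Longrightarrow> x \<in> Z" "f x = Some y \<Longrightarrow> y \<in> Z"
    "f x = Some y \<Longrightarrow> f x' = Some y \<Longrightarrow> x = x'"
proof -
  show "f x = Some y \<Longrightarrow> x \<in> Z" using assms unfolding sym_inv_def by (auto simp: dom_def)
  show "f x = Some y \<Longrightarrow> y \<in> Z" using assms unfolding sym_inv_def by (auto simp: ran_def)
  show "f x = Some y \<Longrightarrow> f x' = Some y \<Longrightarrow> x = x'" using assms unfolding sym_inv_def inj_on_def
    by (simp add: domI)
qed

lemma sym_invI:
  assumes "\<And>x y. f x = Some y \<Longrightarrow> x \<in> Z \<and> y \<in> Z"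
    "\<And>x x' y. f x = Some y \<Longrightarrow> f x' = Some y \<Longrightarrow> x = x'"
  shows "f \<in> sym_inv Z"
  unfolding sym_inv_def inj_on_def dom_def ran_def using assms by auto

lemma conj_sym_inv:
  assumes m: "minv h g Z Z'" and f: "f \<in> sym_inv Z"
  shows "conjm h g Z' f \<in> sym_inv Z'"
proof (rule sym_invI)
  fix x y assume "conjm h g Z' f x = Some y"
  then show "x \<in> Z' \<and> y \<in> Z'" using m sym_invD[OF f]
    unfolding conjm_def minv_def by (auto split: if_splits)
next
  fix x x' y assume a: "conjm h g Z' f x = Some y" "conjm h g Z' f x' = Some y"
  then obtain u u' where u: "x \<in> Z'" "x' \<in> Z'" "f (g x) = Some u" "f (g x') = Some u'" "h u = y" "h u' = y"
    unfolding conjm_def by (auto split: if_splits)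
  have "u \<in> Z" "u' \<in> Z" using u sym_invD[OF f] by auto
  then have "g (h u) = u" "g (h u') = u'" using m unfolding minv_def by auto
  then have "u = u'" using u by simp
  then have "g x = g x'" using u sym_invD(3)[OF f, of "g x" u "g x'"] by simp
  moreover have "h (g x) = x" "h (g x') = x'" using m u unfolding minv_def by auto
  ultimately show "x = x'" by metis
qed

lemma conj_pcomp:
  assumes m: "minv h g Z Z'" and f: "f \<in> sym_inv Z"
  shows "conjm h g Z' (pcomp f f') = pcomp (conjm h g Z' f) (conjm h g Z' f')"
proof
  fix y show "conjm h g Z' (pcomp f f') y = pcomp (conjm h g Z' f) (conjm h g Z' f') y"
  proof (cases "y \<in> Z'")
    case True
    show ?thesis
    proof (cases "f (g y)")
      case None then show ?thesis using True by (simp add: conjm_def pcomp_def map_comp_def)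
    next
      case (Some x)
      then have "x \<in> Z" using sym_invD[OF f] by auto
      then show ?thesis using True Some m unfolding minv_def by (simp add: conjm_def pcomp_def map_comp_def)
    qed
  qed (simp add: conjm_def pcomp_def map_comp_def)
qed

lemma conj_inv:
  assumes m: "minv h g Z Z'" and f: "f \<in> sym_inv Z"
  shows "conjm g h Z (conjm h g Z' f) = f"
proof
  fix x show "conjm g h Z (conjm h g Z' f) x = f x"
  proof (cases "x \<in> Z")
    case True
    then show ?thesis using m sym_invD[OF f] unfolding minv_def conjm_def
      by (cases "f x") auto
  next
    case False
    then show ?thesis using sym_invD[OF f] unfolding conjm_def by (cases "f x") auto
  qed
qed

lemma transfer_real:
  assumes m: "minv h g Z Z'" and r: "realizes A w Z s"
  shows "realizes A w Z' (\<lambda>n. conjm h g Z' (s n))"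
proof -
  obtain \<phi> where p: "word_hom A Z \<phi>" "\<forall>n. \<phi> (w n) = s n" using r unfolding realizes_def by blast
  define \<psi> where "\<psi> u = conjm h g Z' (\<phi> u)" for u
  have "word_hom A Z' \<psi>"
    using p(1) conj_sym_inv[OF m] conj_pcomp[OF m] unfolding word_hom_def \<psi>_def by simp
  moreover have "\<forall>n. \<psi> (w n) = conjm h g Z' (s n)" using p(2) \<psi>_def by simp
  ultimately show ?thesis unfolding realizes_def by blast
qed

lemma transfer_allreal:
  assumes m: "minv h g Z Z'" and r: "allreal A w Z"
  shows "allreal A w Z'"
  unfolding allreal_def
proof (intro allI impI)
  fix t assume t: "struct Z' t"
  have m': "minv g h Z' Z" using minv_sym[OF m] .
  have "struct Z (\<lambda>n. conjm g h Z (t n))" using t conj_sym_inv[OF m'] unfolding struct_def by auto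
  then have "realizes A w Z (\<lambda>n. conjm g h Z (t n))" using r unfolding allreal_def by blast
  from transfer_real[OF m this] show "realizes A w Z' t"
    using conj_inv[OF m'] t unfolding struct_def by simp
qed

lemma bij_minv: "bij_betw h Z Z' \<Longrightarrow> minv h (inv_into Z h) Z Z'"
proof -
  assume b: "bij_betw h Z Z'"
  have "inv_into Z h y \<in> Z" if "y \<in> Z'" for y
    using b that inv_into_into[of y h Z] unfolding bij_betw_def by blast
  then show ?thesis unfolding minv_def
    using b bij_betw_inv_into_left[OF b] bij_betw_inv_into_right[OF b] bij_betwE[OF b] by blast
qed

lemma ordIso_allreal: "|Z| =o |Z'| \<Longrightarrow> allreal A w Z \<Longrightarrow> allreal A w Z'"
proof -
  assume "|Z| =o |Z'|" "allreal A w Z"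
  then obtain h where "bij_betw h Z Z'" using card_of_ordIso by blast
  then show ?thesis using transfer_allreal[OF bij_minv] \<open>allreal A w Z\<close> by blast
qed




lemma hom_closed:
  assumes h: "word_hom A Z \<phi>" and W: "\<forall>a\<in>A. \<forall>x\<in>W. \<forall>y. \<phi> [a] x = Some y \<longrightarrow> y \<in> W"
  shows "u \<in> lists A \<Longrightarrow> u \<noteq> [] \<Longrightarrow> x \<in> W \<Longrightarrow> \<phi> u x = Some y \<Longrightarrow> y \<in> W"
proof (induction u arbitrary: x y)
  case Nil then show ?case by simp
next
  case (Cons a u)
  show ?case
  proof (cases "u = []")
    case True
    then have "\<phi> [a] x = Some y" "a \<in> A" using Cons.prems by auto
    thus ?thesis using W Cons.prems(3) by blast
  next
    case False
    have "[a] \<in> lists A" "u \<in> lists A" using Cons.prems by auto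
    then have "\<phi> ([a] @ u) = pcomp (\<phi> [a]) (\<phi> u)" using h False unfolding word_hom_def by blast
    then have e: "\<phi> (a # u) = \<phi> u \<circ>\<^sub>m \<phi> [a]" by (simp add: pcomp_def)
    from Cons.prems(4) e obtain z where z: "\<phi> [a] x = Some z" "\<phi> u z = Some y"
      by (auto simp: map_comp_def split: option.splits)
    have "a \<in> A" using Cons.prems by auto
    then have "z \<in> W" using W z(1) Cons.prems(3) by blast
    then show ?thesis using Cons.IH[OF _ False _ z(2)] Cons.prems by auto
  qed
qed

lemma restrict_hom:
  assumes h: "word_hom A Z \<phi>" and WZ: "W \<subseteq> Z"
    and W: "\<forall>a\<in>A. \<forall>x\<in>W. \<forall>y. \<phi> [a] x = Some y \<longrightarrow> y \<in> W"
  shows "word_hom A W (\<lambda>u. \<phi> u |` W)"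
  unfolding word_hom_def
proof (intro conjI allI impI)
  fix u assume u: "u \<in> lists A \<and> u \<noteq> []"
  then have f: "\<phi> u \<in> sym_inv Z" using h unfolding word_hom_def by blast
  show "\<phi> u |` W \<in> sym_inv W"
  proof (rule sym_invI)
    fix x y assume "(\<phi> u |` W) x = Some y"
    then show "x \<in> W \<and> y \<in> W" using hom_closed[OF h W, of u x y] u
      by (auto simp: restrict_map_def split: if_splits)
  next
    fix x x' y assume "(\<phi> u |` W) x = Some y" "(\<phi> u |` W) x' = Some y"
    then show "x = x'" using sym_invD(3)[OF f] by (auto simp: restrict_map_def split: if_splits)
  qed
next
  fix u v assume uv: "u \<in> lists A \<and> u \<noteq> [] \<and> v \<in> lists A \<and> v \<noteq> []"
  then have e: "\<phi> (u @ v) = \<phi> v \<circ>\<^sub>m \<phi> u" using h unfolding word_hom_def pcomp_def by blast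
  show "\<phi> (u @ v) |` W = pcomp (\<phi> u |` W) (\<phi> v |` W)"
  proof
    fix x show "(\<phi> (u @ v) |` W) x = pcomp (\<phi> u |` W) (\<phi> v |` W) x"
    proof (cases "x \<in> W")
      case True
      show ?thesis
      proof (cases "\<phi> u x")
        case None then show ?thesis using True e by (simp add: pcomp_def map_comp_def)
      next
        case (Some z)
        then have "z \<in> W" using hom_closed[OF h W, of u x z] uv True by auto
        then show ?thesis using True e Some by (simp add: pcomp_def map_comp_def)
      qed
    qed (simp add: pcomp_def map_comp_def)
  qed
qed

lemma restrict_real:
  assumes h: "word_hom A Z \<phi>" and WZ: "W \<subseteq> Z"
    and W: "\<forall>a\<in>A. \<forall>x\<in>W. \<forall>y. \<phi> [a] x = Some y \<longrightarrow> y \<in> W"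
    and e: "\<forall>n. \<phi> (w n) = s n"
  shows "realizes A w W (\<lambda>n. s n |` W)"
  using restrict_hom[OF h WZ W] e unfolding realizes_def by auto

lemma glue:
  assumes blocks: "\<Union>(B ` J) = Z" and disj: "\<forall>i\<in>J. \<forall>j\<in>J. i \<noteq> j \<longrightarrow> B i \<inter> B j = {}"
    and st: "struct Z s"
    and inv: "\<forall>n x y j. j \<in> J \<longrightarrow> s n x = Some y \<longrightarrow> (x \<in> B j \<longleftrightarrow> y \<in> B j)"
    and r: "\<forall>j\<in>J. realizes A w (B j) (\<lambda>n. s n |` B j)"
  shows "realizes A w Z s"
proof -
  obtain \<Phi> where \<Phi>: "\<forall>j\<in>J. word_hom A (B j) (\<Phi> j) \<and> (\<forall>n. \<Phi> j (w n) = s n |` B j)"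
    using bchoice[OF r[unfolded realizes_def]] by blast
  define blk where "blk x = (SOME j. j \<in> J \<and> x \<in> B j)" for x
  have blk: "blk x = j" if "j \<in> J" "x \<in> B j" for x j
  proof -
    have "blk x \<in> J \<and> x \<in> B (blk x)" unfolding blk_def by (rule someI[of _ j]) (use that in auto)
    show ?thesis
    proof (rule ccontr)
      assume "blk x \<noteq> j"
      then have "B (blk x) \<inter> B j = {}" using disj \<open>blk x \<in> J \<and> x \<in> B (blk x)\<close> that by blast
      then show False using \<open>blk x \<in> J \<and> x \<in> B (blk x)\<close> that by blast
    qed
  qed
  have blkZ: "blk x \<in> J \<and> x \<in> B (blk x)" if xZ: "x \<in> Z" for x
  proof -
    obtain j where "j \<in> J" "x \<in> B j" using blocks xZ by blast
    then show ?thesis using blk[of j x] by simp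
  qed
  define \<psi> where "\<psi> u x = (if x \<in> Z then \<Phi> (blk x) u x else None)" for u x
  have hw: "word_hom A Z \<psi>"
    unfolding word_hom_def
  proof (intro conjI allI impI)
    fix u assume u: "u \<in> lists A \<and> u \<noteq> []"
    have si: "\<Phi> j u \<in> sym_inv (B j)" if "j \<in> J" for j using \<Phi> that u unfolding word_hom_def by blast
    show "\<psi> u \<in> sym_inv Z"
    proof (rule sym_invI)
      fix x y assume a: "\<psi> u x = Some y"
      then have x: "x \<in> Z" unfolding \<psi>_def by (auto split: if_splits)
      then have "\<Phi> (blk x) u x = Some y" using a unfolding \<psi>_def by auto
      then have "y \<in> B (blk x)" using sym_invD(2)[OF si] blkZ[OF x] by blast
      then show "x \<in> Z \<and> y \<in> Z" using x blkZ[OF x] blocks by blast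
    next
      fix x x' y assume a: "\<psi> u x = Some y" "\<psi> u x' = Some y"
      then have x: "x \<in> Z" "x' \<in> Z" unfolding \<psi>_def by (auto split: if_splits)
      then have b: "\<Phi> (blk x) u x = Some y" "\<Phi> (blk x') u x' = Some y" using a unfolding \<psi>_def by auto
      then have "y \<in> B (blk x)" "y \<in> B (blk x')" using sym_invD(2)[OF si] blkZ x by blast+
      then have "blk x = blk x'" using disj blkZ[OF x(1)] blkZ[OF x(2)] by blast
      then show "x = x'" using b sym_invD(3)[OF si[of "blk x"], of x y x'] blkZ[OF x(1)] by simp
    qed
  next
    fix u v assume uv: "u \<in> lists A \<and> u \<noteq> [] \<and> v \<in> lists A \<and> v \<noteq> []"
    show "\<psi> (u @ v) = pcomp (\<psi> u) (\<psi> v)"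
    proof
      fix x show "\<psi> (u @ v) x = pcomp (\<psi> u) (\<psi> v) x"
      proof (cases "x \<in> Z")
        case True
        let ?j = "blk x"
        have j: "?j \<in> J" "x \<in> B ?j" using blkZ True by auto
        have e: "\<Phi> ?j (u @ v) = \<Phi> ?j v \<circ>\<^sub>m \<Phi> ?j u" using \<Phi> j uv unfolding word_hom_def pcomp_def by blast
        have si: "\<Phi> ?j u \<in> sym_inv (B ?j)" using \<Phi> j uv unfolding word_hom_def by blast
        show ?thesis
        proof (cases "\<Phi> ?j u x")
          case None then show ?thesis using True e by (simp add: \<psi>_def pcomp_def map_comp_def)
        next
          case (Some z)
          then have "z \<in> B ?j" using sym_invD(2)[OF si] by blast
          then have "z \<in> Z" "blk z = ?j" using blk[OF j(1)] j(1) blocks by blast+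
          then show ?thesis using True e Some by (simp add: \<psi>_def pcomp_def map_comp_def)
        qed
      qed (simp add: \<psi>_def pcomp_def map_comp_def)
    qed
  qed
  have "\<psi> (w n) = s n" for n
  proof
    fix x show "\<psi> (w n) x = s n x"
    proof (cases "x \<in> Z")
      case True
      then show ?thesis using \<Phi> blkZ[OF True] unfolding \<psi>_def by (simp add: restrict_map_def)
    next
      case False
      have "s n \<in> sym_inv Z" using st unfolding struct_def by blast
      then have "s n x = None" using False sym_invD(1)[of "s n" Z x] by (cases "s n x") auto
      then show ?thesis using False unfolding \<psi>_def by simp
    qed
  qed
  then show ?thesis using hw unfolding realizes_def by blast
qed




definition srel :: "(nat \<Rightarrow> 'a \<rightharpoonup> 'a) \<Rightarrow> ('a \<times> 'a) set" where
  "srel s = {(x,y). \<exists>n. s n x = Some y \<or> s n y = Some x}"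
definition cls :: "(nat \<Rightarrow> 'a \<rightharpoonup> 'a) \<Rightarrow> 'a \<Rightarrow> 'a set" where
  "cls s x = (srel s)\<^sup>* `` {x}"

lemma subsingleton_countable: "(\<And>a b. a \<in> S \<Longrightarrow> b \<in> S \<Longrightarrow> a = b) \<Longrightarrow> countable S"
proof (cases "S = {}")
  case False
  assume h: "\<And>a b. a \<in> S \<Longrightarrow> b \<in> S \<Longrightarrow> a = b"
  obtain a where a: "a \<in> S" using False by blast
  have "S \<subseteq> {a}" using h[OF _ a] by blast
  then show ?thesis using countable_subset[of S "{a}"] by simp
qed simp

lemma srel_Image_countable:
  assumes st: "struct Z s" and Y: "countable Y"
  shows "countable (srel s `` Y)"
proof -
  have sub: "srel s `` Y \<subseteq> (\<Union>x\<in>Y. \<Union>n. set_option (s n x) \<union> {y. s n y = Some x})"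
    unfolding srel_def by auto
  moreover have sc: "countable {y. s n y = Some x}" for n x
  proof (rule subsingleton_countable)
    fix a b assume "a \<in> {y. s n y = Some x}" "b \<in> {y. s n y = Some x}"
    then show "a = b" using sym_invD(3)[of "s n" Z a x b] st unfolding struct_def by auto
  qed
  have "countable (\<Union>x\<in>Y. \<Union>n. set_option (s n x) \<union> {y. s n y = Some x})"
    apply (rule countable_UN[OF Y])
    apply (rule countable_UN[OF countableI_type])
    apply (rule countable_Un)
     apply (simp add: countable_set_option)
    by (rule sc)
  then show ?thesis using countable_subset[OF sub] by blast
qed

lemma cls_countable: "struct Z s \<Longrightarrow> countable (cls s x)"
  unfolding cls_def by (rule countable_rtrancl) (auto intro: srel_Image_countable)

lemma cls_mem: "x \<in> cls s x"
  unfolding cls_def by auto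

lemma srel_sub: assumes st: "struct Z s" and xy: "(x, y) \<in> srel s" shows "x \<in> Z \<and> y \<in> Z"
proof -
  obtain n where n: "s n x = Some y \<or> s n y = Some x" using xy unfolding srel_def by auto
  have f: "s n \<in> sym_inv Z" using st unfolding struct_def by blast
  show ?thesis using n sym_invD(1,2)[OF f] by metis
qed

lemma cls_sub: assumes st: "struct Z s" and x: "x \<in> Z" shows "cls s x \<subseteq> Z"
proof
  fix y assume "y \<in> cls s x"
  then have "(x, y) \<in> (srel s)\<^sup>*" unfolding cls_def by auto
  then show "y \<in> Z" using x
  proof (induction rule: rtrancl_induct)
    case (step y z)
    then show ?case using srel_sub[OF st, of y z] by simp
  qed
qed

lemma srel_sym: "(x, y) \<in> srel s \<Longrightarrow> (y, x) \<in> srel s"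
  unfolding srel_def by blast

lemma srel_rtrancl_sym: "(x, y) \<in> (srel s)\<^sup>* \<Longrightarrow> (y, x) \<in> (srel s)\<^sup>*"
proof (induction rule: rtrancl_induct)
  case (step y z)
  have "(z, y) \<in> (srel s)\<^sup>*" using r_into_rtrancl[OF srel_sym[OF step(2)]] .
  then show ?case using step(3) by (rule rtrancl_trans)
qed simp

lemma cls_eq: "y \<in> cls s x \<Longrightarrow> cls s y = cls s x"
proof -
  assume "y \<in> cls s x"
  then have xy: "(x, y) \<in> (srel s)\<^sup>*" unfolding cls_def by simp
  then have yx: "(y, x) \<in> (srel s)\<^sup>*" by (rule srel_rtrancl_sym)
  show ?thesis
  proof (rule set_eqI)
    fix z
    have "(y, z) \<in> (srel s)\<^sup>* \<Longrightarrow> (x, z) \<in> (srel s)\<^sup>*" using xy by (rule rtrancl_trans)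
    moreover have "(x, z) \<in> (srel s)\<^sup>* \<Longrightarrow> (y, z) \<in> (srel s)\<^sup>*" using yx by (rule rtrancl_trans)
    ultimately show "z \<in> cls s y \<longleftrightarrow> z \<in> cls s x" unfolding cls_def by blast
  qed
qed

lemma cls_step: "s n x = Some y \<Longrightarrow> cls s y = cls s x"
proof -
  assume "s n x = Some y"
  then have "(x, y) \<in> srel s" unfolding srel_def by auto
  then have "y \<in> cls s x" unfolding cls_def by auto
  then show ?thesis by (rule cls_eq)
qed

lemma cls_meet: "z \<in> cls s x \<Longrightarrow> z \<in> cls s y \<Longrightarrow> cls s x = cls s y"
proof -
  assume a: "z \<in> cls s x" "z \<in> cls s y"
  have "cls s z = cls s x" "cls s z = cls s y" using cls_eq[OF a(1)] cls_eq[OF a(2)] by auto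
  then show ?thesis by simp
qed

lemma struct_restrict:
  assumes st: "struct Z s" and inv: "\<forall>n x y. s n x = Some y \<longrightarrow> (x \<in> B \<longleftrightarrow> y \<in> B)"
  shows "struct B (\<lambda>n. s n |` B)"
  unfolding struct_def
proof
  fix n
  have f: "s n \<in> sym_inv Z" using st unfolding struct_def by blast
  show "s n |` B \<in> sym_inv B"
  proof (rule sym_invI)
    fix x y assume "(s n |` B) x = Some y"
    then have "x \<in> B" "s n x = Some y" by (auto simp: restrict_map_def split: if_splits)
    then show "x \<in> B \<and> y \<in> B" using inv[rule_format, of n x y] by simp
  next
    fix x x' y assume "(s n |` B) x = Some y" "(s n |` B) x' = Some y"
    then show "x = x'" using sym_invD(3)[OF f] by (auto simp: restrict_map_def split: if_splits)
  qed
qed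

lemma countable_le_infinite: "countable C \<Longrightarrow> infinite Q \<Longrightarrow> |C| \<le>o |Q|"
proof -
  assume a: "countable C" "infinite Q"
  show ?thesis using ordLeq_transitive[OF countable_card_of_nat[THEN iffD1, OF a(1)] infinite_iff_card_of_nat[THEN iffD1, OF a(2)]] .
qed

lemma part1:
  fixes X :: "'x set" and Y :: "'y set"
  assumes Xinf: "infinite X" and le: "|X| \<le>o |Y|" and rX: "allreal A w X"
  shows "allreal A w Y"
proof (cases "countable Y")
  case True
  have Yinf: "infinite Y" using card_of_ordLeq_infinite[OF le Xinf] .
  have "countable X" using countable_card_of_nat[THEN iffD2, OF ordLeq_transitive[OF le countable_card_of_nat[THEN iffD1, OF True]]] .
  then obtain e1 where e1: "bij_betw e1 X (UNIV :: nat set)" using Xinf countableE_infinite by metis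
  obtain e2 where e2: "bij_betw e2 Y (UNIV :: nat set)" using True Yinf countableE_infinite by metis
  have "bij_betw (inv_into Y e2 \<circ> e1) X Y" using bij_betw_trans[OF e1 bij_betw_inv_into[OF e2]] .
  then have "|X| =o |Y|" using card_of_ordIso by blast
  then show ?thesis using ordIso_allreal[OF _ rX] by blast
next
  case False
  show ?thesis unfolding allreal_def
  proof (intro allI impI)
    fix s assume st: "struct Y s"
    define Q where "Q = cls s ` Y"
    have QY: "\<Union>Q = Y"
    proof
      show "\<Union>Q \<subseteq> Y" unfolding Q_def using cls_sub[OF st] by auto
      show "Y \<subseteq> \<Union>Q" unfolding Q_def using cls_mem[of _ s] by auto
    qed
    have Qc: "countable q" if "q \<in> Q" for q using that cls_countable[OF st] unfolding Q_def by auto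
    have Qinf: "infinite Q"
    proof
      assume "finite Q"
      then have "countable (\<Union>q\<in>Q. q)" using Qc by (intro countable_UN) (simp_all add: countable_finite)
      then show False using QY False by simp
    qed
    have "|\<Union>q\<in>Q. q| \<le>o |Q|"
      apply (rule card_of_UNION_ordLeq_infinite[OF Qinf ordLeq_refl[OF card_of_Card_order]])
      by (intro ballI countable_le_infinite[OF Qc Qinf])
    then have YQ: "|Y| \<le>o |Q|" using QY by simp
    have XQ: "|X| \<le>o |Q|" using ordLeq_transitive[OF le YQ] .
    have "X \<noteq> {}" using Xinf by auto
    then have "|Q \<times> X| =o |Q|" using card_of_Times_infinite_simps(1)[OF Qinf _ XQ] by simp
    then obtain g where g: "bij_betw g (Q \<times> X) Q" using card_of_ordIso by blast
    have ginj: "inj_on g (Q \<times> X)" and gim: "g ` (Q \<times> X) = Q" using g unfolding bij_betw_def by auto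
    define Bl where "Bl q = (\<Union>x\<in>X. g (q, x))" for q
    have gQ: "g (q, x) \<in> Q" if "q \<in> Q" "x \<in> X" for q x using gim that by auto
    have clsQ: "C = cls s z" if CQ: "C \<in> Q" and zC: "z \<in> C" for C z
    proof -
      obtain y where "C = cls s y" using CQ unfolding Q_def by auto
      then show ?thesis using cls_eq[of z s y] zC by simp
    qed
    have meetQ: "C1 = C2" if "C1 \<in> Q" "C2 \<in> Q" "z \<in> C1" "z \<in> C2" for C1 C2 z
      using clsQ[OF that(1,3)] clsQ[OF that(2,4)] by simp
    have cover: "\<Union>(Bl ` Q) = Y"
    proof -
      have "\<Union>(Bl ` Q) = \<Union>(g ` (Q \<times> X))" unfolding Bl_def by auto
      also have "\<dots> = \<Union>Q" using gim by simp
      finally show ?thesis using QY by simp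
    qed
    have disj: "\<forall>i\<in>Q. \<forall>j\<in>Q. i \<noteq> j \<longrightarrow> Bl i \<inter> Bl j = {}"
    proof (intro ballI impI)
      fix i j assume ij: "i \<in> Q" "j \<in> Q" "i \<noteq> j"
      show "Bl i \<inter> Bl j = {}"
      proof (rule ccontr)
        assume "Bl i \<inter> Bl j \<noteq> {}"
        then obtain z x1 x2 where z: "x1 \<in> X" "x2 \<in> X" "z \<in> g (i, x1)" "z \<in> g (j, x2)" unfolding Bl_def by blast
        then have "g (i, x1) = g (j, x2)" using meetQ[OF gQ[OF ij(1) z(1)] gQ[OF ij(2) z(2)] z(3,4)] by simp
        then have "(i, x1) = (j, x2)" using inj_onD[OF ginj, of "(i, x1)" "(j, x2)"] ij z by simp
        then show False using ij by simp
      qed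
    qed
    have inv: "\<forall>n x y j. j \<in> Q \<longrightarrow> s n x = Some y \<longrightarrow> (x \<in> Bl j \<longleftrightarrow> y \<in> Bl j)"
    proof (intro allI impI)
      fix n x y j assume j: "j \<in> Q" and e: "s n x = Some y"
      have c: "cls s y = cls s x" using cls_step[of s n x y, OF e] .
      have xy: "x \<in> C \<longleftrightarrow> y \<in> C" if "C \<in> Q" for C
      proof
        assume "x \<in> C" then have "C = cls s x" using clsQ[OF that] by simp
        then show "y \<in> C" using c cls_mem[of y s] by simp
      next
        assume "y \<in> C" then have "C = cls s y" using clsQ[OF that] by simp
        then show "x \<in> C" using c cls_mem[of x s] by simp
      qed
      show "x \<in> Bl j \<longleftrightarrow> y \<in> Bl j" unfolding Bl_def using xy[OF gQ[OF j]] by simp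
    qed
    have real: "realizes A w (Bl q) (\<lambda>n. s n |` Bl q)" if q: "q \<in> Q" for q
    proof -
      have "|Bl q| \<le>o |X|" unfolding Bl_def
        apply (rule card_of_UNION_ordLeq_infinite[OF Xinf ordLeq_refl[OF card_of_Card_order]])
        by (intro ballI countable_le_infinite[OF Qc[OF gQ[OF q]] Xinf])
      moreover have "|X| \<le>o |Bl q|"
      proof -
        define f where "f x = (SOME z. z \<in> g (q, x))" for x
        have fm: "f x \<in> g (q, x)" if xX: "x \<in> X" for x
        proof -
          obtain z where "g (q, x) = cls s z" using gQ[OF q xX] unfolding Q_def by auto
          then have "z \<in> g (q, x)" using cls_mem[of z s] by simp
          then show ?thesis unfolding f_def by (rule someI)
        qed
        have "inj_on f X"
        proof
          fix x1 x2 assume x: "x1 \<in> X" "x2 \<in> X" "f x1 = f x2"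
          then have "g (q, x1) = g (q, x2)" using meetQ[OF gQ[OF q x(1)] gQ[OF q x(2)] fm[OF x(1)]] fm[OF x(2)] by simp
          then show "x1 = x2" using inj_onD[OF ginj, of "(q, x1)" "(q, x2)"] q x by simp
        qed
        moreover have "f ` X \<subseteq> Bl q" unfolding Bl_def using fm by auto
        ultimately show ?thesis using card_of_ordLeq by blast
      qed
      ultimately have "|X| =o |Bl q|" using ordIso_iff_ordLeq by blast
      then have "allreal A w (Bl q)" using ordIso_allreal[OF _ rX] by blast
      moreover have "struct (Bl q) (\<lambda>n. s n |` Bl q)"
        apply (rule struct_restrict[OF st]) using inv q by simp
      ultimately show ?thesis unfolding allreal_def by blast
    qed
    show "realizes A w Y s" using glue[OF cover disj st inv] real by blast
  qed
qed




type_synonym code = "nat set \<times> (nat \<Rightarrow> nat \<rightharpoonup> nat)"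

definition mcar :: "'i set \<Rightarrow> ('i \<Rightarrow> code) \<Rightarrow> ('i \<times> nat) set" where
  "mcar I c = Sigma I (\<lambda>i. fst (c i))"
definition mmap :: "'i set \<Rightarrow> ('i \<Rightarrow> code) \<Rightarrow> nat \<Rightarrow> ('i \<times> nat) \<rightharpoonup> ('i \<times> nat)" where
  "mmap I c n p = (if p \<in> mcar I c then map_option (Pair (fst p)) (snd (c (fst p)) n (snd p)) else None)"
definition valid :: "code \<Rightarrow> bool" where "valid k \<longleftrightarrow> (\<forall>n. snd k n \<in> sym_inv (fst k))"

lemma fin_le_inf: "finite A \<Longrightarrow> infinite B \<Longrightarrow> |A| \<le>o |B|"
proof -
  assume a: "finite A" "infinite B"
  have "|A| <o |B| \<or> |B| \<le>o |A|" using ordLess_or_ordLeq[OF card_of_Well_order card_of_Well_order] .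
  then show ?thesis
  proof
    assume "|B| \<le>o |A|" then have "finite B" using card_of_ordLeq_finite a(1) by blast
    then show ?thesis using a(2) by simp
  qed (rule ordLess_imp_ordLeq)
qed

lemma un_le: "infinite C \<Longrightarrow> |A| \<le>o |C| \<Longrightarrow> |B| \<le>o |C| \<Longrightarrow> |A \<union> B| \<le>o |C|"
proof -
  assume a: "infinite C" "|A| \<le>o |C|" "|B| \<le>o |C|"
  have "|\<Union>X\<in>{A, B}. X| \<le>o |C|"
    apply (rule card_of_UNION_ordLeq_infinite[OF a(1) fin_le_inf[OF _ a(1)]])
    using a by auto
  then show ?thesis by simp
qed

lemma mstruct: "\<forall>i\<in>I. valid (c i) \<Longrightarrow> struct (mcar I c) (mmap I c)"
  unfolding struct_def
proof
  fix n assume v: "\<forall>i\<in>I. valid (c i)"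
  show "mmap I c n \<in> sym_inv (mcar I c)"
  proof (rule sym_invI)
    fix p p' assume a: "mmap I c n p = Some p'"
    obtain j i where p: "p = (j, i)" by (cases p)
    have pm: "p \<in> mcar I c" using a unfolding mmap_def by (auto split: if_splits)
    then have j: "j \<in> I" "i \<in> fst (c j)" using p unfolding mcar_def by auto
    obtain i' where i': "snd (c j) n i = Some i'" "p' = (j, i')" using a pm p unfolding mmap_def by auto
    have "snd (c j) n \<in> sym_inv (fst (c j))" using v j unfolding valid_def by blast
    then have "i' \<in> fst (c j)" using sym_invD(2) i'(1) by metis
    then show "p \<in> mcar I c \<and> p' \<in> mcar I c" using pm i' j unfolding mcar_def by auto
  next
    fix p1 p2 p' assume a: "mmap I c n p1 = Some p'" "mmap I c n p2 = Some p'"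
    obtain j1 i1 where p1: "p1 = (j1, i1)" by (cases p1)
    obtain j2 i2 where p2: "p2 = (j2, i2)" by (cases p2)
    have pm: "p1 \<in> mcar I c" "p2 \<in> mcar I c" using a unfolding mmap_def by (auto split: if_splits)
    then have j: "j1 \<in> I" using p1 unfolding mcar_def by auto
    obtain i1' where i1: "snd (c j1) n i1 = Some i1'" "p' = (j1, i1')" using a(1) pm p1 unfolding mmap_def by auto
    obtain i2' where i2: "snd (c j2) n i2 = Some i2'" "p' = (j2, i2')" using a(2) pm p2 unfolding mmap_def by auto
    have jj: "j1 = j2" "i1' = i2'" using i1 i2 by auto
    have "snd (c j1) n \<in> sym_inv (fst (c j1))" using v j unfolding valid_def by blast
    then have "i1 = i2" using sym_invD(3)[of "snd (c j1) n" "fst (c j1)" i1 i1' i2] i1 i2 jj by simp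
    then show "p1 = p2" using p1 p2 jj by simp
  qed
qed

lemma mmap_fst: "mmap I c n p = Some p' \<Longrightarrow> fst p' = fst p \<and> p \<in> mcar I c"
  unfolding mmap_def by (auto split: if_splits)

lemma mmap_restrict: "I' \<subseteq> I \<Longrightarrow> mmap I c n |` mcar I' c = mmap I' c n"
proof
  fix p assume "I' \<subseteq> I"
  then show "(mmap I c n |` mcar I' c) p = mmap I' c n p"
    unfolding mmap_def restrict_map_def mcar_def by auto
qed

lemma model_iso:
  assumes b: "bij_betw \<beta> I1 I2" and cc: "\<forall>j\<in>I1. c2 (\<beta> j) = c1 j"
    and r: "realizes A w (mcar I1 c1) (mmap I1 c1)"
  shows "realizes A w (mcar I2 c2) (mmap I2 c2)"
proof -
  define h where "h p = (\<beta> (fst p), snd p)" for p :: "_ \<times> nat"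
  define g where "g p = (inv_into I1 \<beta> (fst p), snd p)" for p :: "_ \<times> nat"
  have bi: "\<And>j. j \<in> I1 \<Longrightarrow> \<beta> j \<in> I2 \<and> inv_into I1 \<beta> (\<beta> j) = j"
    using b bij_betw_inv_into_left bij_betwE by metis
  have bi2: "\<And>j. j \<in> I2 \<Longrightarrow> inv_into I1 \<beta> j \<in> I1 \<and> \<beta> (inv_into I1 \<beta> j) = j"
    using b bij_betw_inv_into_right bij_betw_inv_into bij_betwE by metis
  have m: "minv h g (mcar I1 c1) (mcar I2 c2)"
    unfolding minv_def
  proof (intro conjI ballI)
    fix p assume p: "p \<in> mcar I1 c1"
    then have "fst p \<in> I1" "snd p \<in> fst (c1 (fst p))" unfolding mcar_def by auto
    then show "h p \<in> mcar I2 c2" "g (h p) = p" using bi cc unfolding h_def g_def mcar_def by auto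
  next
    fix p assume p: "p \<in> mcar I2 c2"
    then have f: "fst p \<in> I2" "snd p \<in> fst (c2 (fst p))" unfolding mcar_def by auto
    then have "c1 (inv_into I1 \<beta> (fst p)) = c2 (fst p)" using bi2 cc by metis
    then show "g p \<in> mcar I1 c1" "h (g p) = p" using bi2 f unfolding h_def g_def mcar_def by auto
  qed
  have e: "conjm h g (mcar I2 c2) (mmap I1 c1 n) = mmap I2 c2 n" for n
  proof
    fix p show "conjm h g (mcar I2 c2) (mmap I1 c1 n) p = mmap I2 c2 n p"
    proof (cases "p \<in> mcar I2 c2")
      case True
      then have f: "fst p \<in> I2" "snd p \<in> fst (c2 (fst p))" unfolding mcar_def by auto
      have gp: "g p \<in> mcar I1 c1" "h (g p) = p" using m True unfolding minv_def by auto
      have c: "c1 (inv_into I1 \<beta> (fst p)) = c2 (fst p)" using bi2 cc f by metis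
      show ?thesis using True gp c bi2[OF f(1)] unfolding conjm_def mmap_def
        by (cases "snd (c2 (fst p)) n (snd p)") (auto simp: h_def g_def)
    next
      case False
      then show ?thesis unfolding conjm_def mmap_def by simp
    qed
  qed
  show ?thesis using transfer_real[OF m r] e by simp
qed

lemma model_glue:
  assumes cover: "\<Union>(Bk ` J) = I" and disj: "\<forall>i\<in>J. \<forall>j\<in>J. i \<noteq> j \<longrightarrow> Bk i \<inter> Bk j = {}"
    and v: "\<forall>i\<in>I. valid (c i)"
    and r: "\<forall>j\<in>J. realizes A w (mcar (Bk j) c) (mmap (Bk j) c)"
  shows "realizes A w (mcar I c) (mmap I c)"
proof (rule glue[where B = "\<lambda>j. mcar (Bk j) c" and J = J])
  show "\<Union>((\<lambda>j. mcar (Bk j) c) ` J) = mcar I c" using cover unfolding mcar_def by auto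
  show "\<forall>i\<in>J. \<forall>j\<in>J. i \<noteq> j \<longrightarrow> mcar (Bk i) c \<inter> mcar (Bk j) c = {}"
    using disj unfolding mcar_def by blast
  show "struct (mcar I c) (mmap I c)" using mstruct[OF v] .
  show "\<forall>n x y j. j \<in> J \<longrightarrow> mmap I c n x = Some y \<longrightarrow> (x \<in> mcar (Bk j) c \<longleftrightarrow> y \<in> mcar (Bk j) c)"
  proof (intro allI impI)
    fix n x y j assume j: "j \<in> J" and e: "mmap I c n x = Some y"
    have f: "fst y = fst x" "x \<in> mcar I c" using mmap_fst[OF e] by auto
    have "y \<in> mcar I c" using mstruct[OF v] e sym_invD(2) unfolding struct_def by metis
    then show "x \<in> mcar (Bk j) c \<longleftrightarrow> y \<in> mcar (Bk j) c" using f unfolding mcar_def by auto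
  qed
  show "\<forall>j\<in>J. realizes A w (mcar (Bk j) c) (\<lambda>n. mmap I c n |` mcar (Bk j) c)"
  proof
    fix j assume j: "j \<in> J"
    have "Bk j \<subseteq> I" using cover j by blast
    then show "realizes A w (mcar (Bk j) c) (\<lambda>n. mmap I c n |` mcar (Bk j) c)"
      using mmap_restrict[of "Bk j" I c] r j by simp
  qed
qed




lemma absorb:
  fixes Y :: "'y set" and I :: "'i set" and A :: "'c set"
  assumes rY: "allreal A w Y" and Yinf: "infinite Y" and cA: "countable A"
    and val: "\<forall>i\<in>I. valid (c i) \<and> fst (c i) \<noteq> {}"
    and KI: "K \<subseteq> I" and Kc: "\<forall>i\<in>K. c i = k0" and KIo: "|K| =o |I|"
    and Iinf: "infinite I" and IY: "|I| \<le>o |Y|"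
  shows "realizes A w (mcar I c) (mmap I c)"
proof -
  have Kinf: "infinite K" using card_of_ordLeq_infinite[OF ordIso_iff_ordLeq[THEN iffD1, OF ordIso_symmetric[OF KIo], THEN conjunct1] Iinf] .
  then obtain k1 where k1: "k1 \<in> K" by (metis finite.emptyI ex_in_conv)
  have "k1 \<in> I" "c k1 = k0" using k1 KI Kc by auto
  then have k0v: "valid k0 \<and> fst k0 \<noteq> {}" using val by metis
  define I' where "I' = I <+> Y"
  define c' where "c' = case_sum c (\<lambda>_::'y. k0)"
  have val': "\<forall>j\<in>I'. valid (c' j) \<and> fst (c' j) \<noteq> {}"
    unfolding I'_def c'_def using val k0v by auto
  define L where "L = mcar I' c'"
  have I'inf: "infinite I'" unfolding I'_def using Iinf by (simp add: Plus_def finite_image_iff)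
  have I'Y: "|I'| =o |Y|" unfolding I'_def using card_of_Plus_infinite2[OF Yinf IY] .
  have "|L| \<le>o |Y|"
  proof -
    have "L \<subseteq> I' \<times> (UNIV :: nat set)" unfolding L_def mcar_def by auto
    then have "|L| \<le>o |I' \<times> (UNIV :: nat set)|" by (rule card_of_mono1)
    moreover have "|I' \<times> (UNIV :: nat set)| =o |I'|"
      using card_of_Times_infinite_simps(1)[OF I'inf _ infinite_iff_card_of_nat[THEN iffD1, OF I'inf]] by simp
    ultimately show ?thesis using ordLeq_ordIso_trans[OF ordLeq_ordIso_trans I'Y] by blast
  qed
  moreover have "|Y| \<le>o |L|"
  proof -
    define f where "f y = (Inr y :: 'i + 'y, SOME i. i \<in> fst k0)" for y
    have "inj_on f Y" unfolding f_def inj_on_def by simp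
    moreover have "f ` Y \<subseteq> L"
    proof
      fix p assume "p \<in> f ` Y"
      then obtain y where y: "y \<in> Y" "p = f y" by auto
      have "(SOME i. i \<in> fst k0) \<in> fst k0" using k0v by (simp add: some_in_eq)
      then show "p \<in> L" using y unfolding f_def L_def mcar_def I'_def c'_def by auto
    qed
    ultimately show ?thesis using card_of_ordLeq by blast
  qed
  ultimately have YL: "|Y| =o |L|" using ordIso_iff_ordLeq by blast
  have "allreal A w L" using ordIso_allreal[OF YL rY] .
  moreover have stL: "struct L (mmap I' c')" unfolding L_def
    apply (rule mstruct) using val' by simp
  ultimately have "realizes A w L (mmap I' c')" unfolding allreal_def by blast
  then obtain \<phi> where ph: "word_hom A L \<phi>" and phe: "\<forall>n. \<phi> (w n) = mmap I' c' n"
    unfolding realizes_def by blast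
  have phL: "\<phi> [a] \<in> sym_inv L" if "a \<in> A" for a
    using ph that unfolding word_hom_def by simp
  define S where "S = {(p, p'). \<exists>a\<in>A. \<phi> [a] p = Some p'} \<union> {(p, p'). p \<in> L \<and> p' \<in> L \<and> fst p = fst p'}"
  have Sc: "countable (S `` Y0)" if Y0: "countable Y0" for Y0
  proof -
    have "S `` Y0 \<subseteq> (\<Union>p\<in>Y0. (\<Union>a\<in>A. set_option (\<phi> [a] p)) \<union> ({fst p} \<times> UNIV))"
      unfolding S_def by force
    moreover have "countable (\<Union>p\<in>Y0. (\<Union>a\<in>A. set_option (\<phi> [a] p)) \<union> ({fst p} \<times> (UNIV :: nat set)))"
      apply (rule countable_UN[OF Y0])
      apply (rule countable_Un)
       apply (rule countable_UN[OF cA])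
       apply (simp add: countable_set_option)
      by simp
    ultimately show ?thesis using countable_subset by blast
  qed
  define W0 where "W0 = mcar (Inl ` I) c'"
  define W where "W = S\<^sup>* `` W0"
  have W0L: "W0 \<subseteq> L" unfolding W0_def L_def mcar_def I'_def by auto
  have SL: "p' \<in> L" if "(p, p') \<in> S" for p p'
  proof -
    from that consider (a) a where "a \<in> A" "\<phi> [a] p = Some p'" | (b) "p' \<in> L" unfolding S_def by auto
    then show ?thesis
    proof cases
      case a then show ?thesis using sym_invD(2)[OF phL[OF a(1)] a(2)] by simp
    qed simp
  qed
  have WL: "W \<subseteq> L"
  proof
    fix p assume "p \<in> W"
    then obtain p0 where p0: "p0 \<in> W0" "(p0, p) \<in> S\<^sup>*" unfolding W_def by auto
    from p0(2) show "p \<in> L"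
    proof (induction rule: rtrancl_induct)
      case base then show ?case using W0L p0(1) by blast
    next
      case (step y z) then show ?case using SL by blast
    qed
  qed
  have W0W: "W0 \<subseteq> W" unfolding W_def by auto
  have Wclos: "\<forall>a\<in>A. \<forall>x\<in>W. \<forall>y. \<phi> [a] x = Some y \<longrightarrow> y \<in> W"
  proof (intro ballI allI impI)
    fix a x y assume a: "a \<in> A" "x \<in> W" "\<phi> [a] x = Some y"
    then have "(x, y) \<in> S" unfolding S_def by auto
    then show "y \<in> W" using a(2) unfolding W_def by (meson Image_iff rtrancl.rtrancl_into_rtrancl)
  qed
  have Wfib: "p' \<in> W" if "p \<in> W" "p' \<in> L" "fst p = fst p'" for p p'
  proof -
    have "p \<in> L" using WL that(1) by blast
    then have "(p, p') \<in> S" unfolding S_def using that by auto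
    then show ?thesis using that(1) unfolding W_def by (meson Image_iff rtrancl.rtrancl_into_rtrancl)
  qed
  define I'' where "I'' = fst ` W"
  have I''I': "I'' \<subseteq> I'" using WL unfolding I''_def L_def mcar_def by auto
  have Wm: "W = mcar I'' c'"
  proof
    show "W \<subseteq> mcar I'' c'" using WL unfolding I''_def L_def mcar_def by force
    show "mcar I'' c' \<subseteq> W"
    proof
      fix q assume q: "q \<in> mcar I'' c'"
      then obtain p where p: "p \<in> W" "fst p = fst q" unfolding I''_def mcar_def by auto
      have "q \<in> L" using q I''I' unfolding L_def mcar_def by auto
      then show "q \<in> W" using Wfib[OF p(1)] p(2) by simp
    qed
  qed
  have InlI: "Inl ` I \<subseteq> I''"
  proof
    fix j :: "'i + 'y" assume "j \<in> Inl ` I"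
    then obtain i where i: "i \<in> I" "j = Inl i" by auto
    obtain t where "t \<in> fst (c i)" using val i by blast
    then have "(j, t) \<in> W0" using i unfolding W0_def mcar_def c'_def by auto
    then show "j \<in> I''" using W0W unfolding I''_def by force
  qed
  have rW: "realizes A w W (\<lambda>n. mmap I' c' n |` W)"
    using restrict_real[OF ph WL Wclos phe] .
  then have rW': "realizes A w (mcar I'' c') (mmap I'' c')"
    using mmap_restrict[OF I''I', of c'] Wm by simp
  have W0inf: "infinite W0"
  proof -
    define f where "f i = (Inl i :: 'i + 'y, SOME t. t \<in> fst (c i))" for i
    have "inj_on f I" unfolding f_def inj_on_def by simp
    moreover have "f ` I \<subseteq> W0"
    proof
      fix p assume "p \<in> f ` I"
      then obtain i where i: "i \<in> I" "p = f i" by auto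
      have "(SOME t. t \<in> fst (c i)) \<in> fst (c i)" using val i by (simp add: some_in_eq)
      then show "p \<in> W0" using i unfolding f_def W0_def mcar_def c'_def by auto
    qed
    ultimately show ?thesis using Iinf finite_subset finite_imageD by metis
  qed
  have "|W| \<le>o |W0|"
  proof -
    have "W = (\<Union>p\<in>W0. S\<^sup>* `` {p})" unfolding W_def by auto
    moreover have "|\<Union>p\<in>W0. S\<^sup>* `` {p}| \<le>o |W0|"
      apply (rule card_of_UNION_ordLeq_infinite[OF W0inf ordLeq_refl[OF card_of_Card_order]])
      apply (intro ballI countable_le_infinite[OF _ W0inf])
      apply (rule countable_rtrancl)
      using Sc by auto
    ultimately show ?thesis by simp
  qed
  moreover have "|W0| \<le>o |I|"
  proof -
    have InlIinf: "infinite (Inl ` I :: ('i + 'y) set)" using Iinf by (simp add: finite_image_iff)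
    have "W0 \<subseteq> (Inl ` I) \<times> (UNIV :: nat set)" unfolding W0_def mcar_def by auto
    then have "|W0| \<le>o |(Inl ` I :: ('i + 'y) set) \<times> (UNIV :: nat set)|" by (rule card_of_mono1)
    moreover have "|(Inl ` I :: ('i + 'y) set) \<times> (UNIV :: nat set)| =o |Inl ` I :: ('i + 'y) set|"
      using card_of_Times_infinite_simps(1)[OF InlIinf _ infinite_iff_card_of_nat[THEN iffD1, OF InlIinf]] by simp
    ultimately have "|W0| \<le>o |Inl ` I :: ('i + 'y) set|" using ordLeq_ordIso_trans by blast
    then show ?thesis using ordLeq_transitive card_of_image by blast
  qed
  ultimately have WK: "|W| \<le>o |K|" using ordLeq_transitive ordLeq_ordIso_trans ordIso_symmetric[OF KIo] by blast
  define Y' where "Y' = {y. Inr y \<in> I''}"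
  have "|Y'| \<le>o |K|"
  proof -
    have "bij_betw (Inr :: 'y \<Rightarrow> 'i + 'y) Y' (Inr ` Y')" unfolding bij_betw_def inj_on_def by simp
    then have a: "|Y'| =o |Inr ` Y' :: ('i + 'y) set|" using card_of_ordIso by blast
    have "Inr ` Y' \<subseteq> I''" unfolding Y'_def by auto
    then have b: "|Inr ` Y' :: ('i + 'y) set| \<le>o |I''|" by (rule card_of_mono1)
    have c: "|I''| \<le>o |W|" unfolding I''_def by (rule card_of_image)
    show ?thesis using ordIso_ordLeq_trans[OF a ordLeq_transitive[OF b ordLeq_transitive[OF c WK]]] .
  qed
  then have K'K: "|K <+> Y'| =o |K|" using card_of_Plus_infinite1[OF Kinf] by blast
  then obtain \<beta>0 where \<beta>0: "bij_betw \<beta>0 (K <+> Y') K" using card_of_ordIso by blast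
  define \<beta> where "\<beta> j = (if j \<in> K <+> Y' then \<beta>0 j else projl j)" for j
  have I''eq: "I'' = (K <+> Y') \<union> Inl ` (I - K)"
  proof
    show "I'' \<subseteq> (K <+> Y') \<union> Inl ` (I - K)"
    proof
      fix j assume j: "j \<in> I''"
      then have "j \<in> I'" using I''I' by blast
      then show "j \<in> (K <+> Y') \<union> Inl ` (I - K)" using j unfolding I'_def Y'_def by auto
    qed
    show "(K <+> Y') \<union> Inl ` (I - K) \<subseteq> I''" using InlI KI unfolding Y'_def by auto
  qed
  have b1: "bij_betw \<beta> (K <+> Y') K" using \<beta>0 bij_betw_cong[of "K <+> Y'" \<beta> \<beta>0 K] unfolding \<beta>_def by simp
  have b2: "bij_betw \<beta> (Inl ` (I - K)) (I - K)"
  proof -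
    have "bij_betw projl (Inl ` (I - K)) (I - K)" unfolding bij_betw_def inj_on_def by force
    moreover have "\<And>j. j \<in> Inl ` (I - K) \<Longrightarrow> \<beta> j = projl j" unfolding \<beta>_def by auto
    ultimately show ?thesis using bij_betw_cong[of "Inl ` (I - K)" \<beta> projl "I - K"] by simp
  qed
  have bb: "bij_betw \<beta> I'' I"
  proof -
    have "bij_betw \<beta> ((K <+> Y') \<union> Inl ` (I - K)) (K \<union> (I - K))"
      by (rule bij_betw_combine[OF b1 b2]) auto
    moreover have "K \<union> (I - K) = I" using KI by auto
    ultimately show ?thesis using I''eq by simp
  qed
  have cc: "\<forall>j\<in>I''. c (\<beta> j) = c' j"
  proof
    fix j assume j: "j \<in> I''"
    show "c (\<beta> j) = c' j"
    proof (cases "j \<in> K <+> Y'")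
      case True
      then have "\<beta> j \<in> K" using b1 bij_betwE by blast
      then have "c (\<beta> j) = k0" using Kc by blast
      moreover have "c' j = k0" using True Kc unfolding c'_def by auto
      ultimately show ?thesis by simp
    next
      case False
      then have "j \<in> Inl ` (I - K)" using j I''eq by blast
      then show ?thesis using False unfolding \<beta>_def c'_def by auto
    qed
  qed
  show ?thesis using model_iso[OF bb cc rW'] .
qed




definition enc :: "code \<Rightarrow> nat set" where
  "enc k = to_nat ` (Inl ` fst k \<union> Inr ` {(n,i,j). snd k n i = Some j} :: (nat + nat \<times> nat \<times> nat) set)"

lemma enc_inj: "inj enc"
proof (rule injI)
  fix k1 k2 assume e: "enc k1 = enc k2"
  define S where "S k = (Inl ` fst k \<union> Inr ` {(n,i,j). snd k n i = Some j} :: (nat + nat \<times> nat \<times> nat) set)" for k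
  have "to_nat ` S k1 = to_nat ` S k2" using e unfolding enc_def S_def .
  then have SS: "S k1 = S k2" using inj_image_eq_iff[OF inj_to_nat] by blast
  have D: "Inl x \<in> S k \<longleftrightarrow> x \<in> fst k" for x k unfolding S_def by auto
  have G: "Inr (n, i, j) \<in> S k \<longleftrightarrow> snd k n i = Some j" for n i j k unfolding S_def by auto
  have "fst k1 = fst k2" using D SS by blast
  moreover have "snd k1 n i = snd k2 n i" for n i
  proof (cases "snd k1 n i")
    case None
    then show ?thesis
    proof (cases "snd k2 n i")
      case (Some j) then show ?thesis using G[of n i j k1] G[of n i j k2] SS None by simp
    qed simp
  next
    case (Some j) then show ?thesis using G[of n i j k1] G[of n i j k2] SS by simp
  qed
  ultimately show "k1 = k2" by (simp add: prod_eq_iff fun_eq_iff)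
qed

lemma PP_inf: "infinite (UNIV :: nat set set)"
proof
  assume "finite (UNIV :: nat set set)"
  then have "finite (range (\<lambda>n::nat. {n}))" by (rule finite_subset[rotated]) simp
  moreover have "inj (\<lambda>n::nat. {n})" by (simp add: inj_on_def)
  ultimately have "finite (UNIV :: nat set)" by (rule finite_imageD)
  then show False by simp
qed

lemma part2:
  fixes X :: "'x set" and Y :: "'y set" and A :: "'c set"
  assumes Xbig: "|UNIV :: nat set set| <o |X|" and XY: "|X| \<le>o |Y|"
    and rY: "allreal A w Y" and cA: "countable A"
  shows "allreal A w X"
  unfolding allreal_def
proof (intro allI impI)
  fix s assume st: "struct X s"
  have Xinf: "infinite X" using card_of_ordLeq_infinite[OF ordLess_imp_ordLeq[OF Xbig] PP_inf] .
  have Yinf: "infinite Y" using card_of_ordLeq_infinite[OF XY Xinf] .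
  define Q where "Q = cls s ` X"
  have Qc: "countable q" if "q \<in> Q" for q using that cls_countable[OF st] unfolding Q_def by auto
  have clsQ: "q = cls s z" if qQ: "q \<in> Q" and zq: "z \<in> q" for q z
  proof -
    obtain y where "q = cls s y" using qQ unfolding Q_def by auto
    then show ?thesis using cls_eq[of z s y] zq by simp
  qed
  have QX: "q \<subseteq> X" if qQ: "q \<in> Q" for q
  proof -
    obtain y where "q = cls s y" "y \<in> X" using qQ unfolding Q_def by auto
    then show ?thesis using cls_sub[OF st] by simp
  qed
  have Qne: "q \<noteq> {}" if qQ: "q \<in> Q" for q
  proof -
    obtain y where "q = cls s y" using qQ unfolding Q_def by auto
    then show ?thesis using cls_mem[of y s] by auto
  qed
  have stepq: "y \<in> q" if qQ: "q \<in> Q" and xq: "x \<in> q" and e: "s n x = Some y" for q x y n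
  proof -
    have "q = cls s x" using clsQ[OF qQ xq] .
    then show ?thesis using cls_step[of s n x y, OF e] cls_mem[of y s] by simp
  qed
  define code where "code q = (to_nat_on q ` q, \<lambda>n i. if i \<in> to_nat_on q ` q
        then map_option (to_nat_on q) (s n (from_nat_into q i)) else None)" for q
  have valid: "valid (code q) \<and> fst (code q) \<noteq> {}" if qQ: "q \<in> Q" for q
  proof
    show "fst (code q) \<noteq> {}" using Qne[OF qQ] unfolding code_def by simp
    have inj: "inj_on (to_nat_on q) q" using Qc[OF qQ] by (rule inj_on_to_nat_on)
    show "valid (code q)" unfolding valid_def
    proof
      fix n
      have f: "s n \<in> sym_inv X" using st unfolding struct_def by blast
      show "snd (code q) n \<in> sym_inv (fst (code q))"
      proof (rule sym_invI)
        fix i j assume a: "snd (code q) n i = Some j"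
        then have i: "i \<in> to_nat_on q ` q" unfolding code_def by (auto split: if_splits)
        then obtain x where x: "x \<in> q" "i = to_nat_on q x" by auto
        have fx: "from_nat_into q i = x" using x Qc[OF qQ] by simp
        obtain y where y: "s n x = Some y" "j = to_nat_on q y" using a i fx unfolding code_def by auto
        have "y \<in> q" using stepq[OF qQ x(1) y(1)] .
        then show "i \<in> fst (code q) \<and> j \<in> fst (code q)" using i y unfolding code_def by auto
      next
        fix i i' j assume a: "snd (code q) n i = Some j" "snd (code q) n i' = Some j"
        then have i: "i \<in> to_nat_on q ` q" "i' \<in> to_nat_on q ` q" unfolding code_def by (auto split: if_splits)
        then obtain x x' where x: "x \<in> q" "i = to_nat_on q x" "x' \<in> q" "i' = to_nat_on q x'" by auto
        have fx: "from_nat_into q i = x" "from_nat_into q i' = x'" using x Qc[OF qQ] by simp_all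
        obtain y where y: "s n x = Some y" "j = to_nat_on q y" using a(1) i fx unfolding code_def by auto
        obtain y' where y': "s n x' = Some y'" "j = to_nat_on q y'" using a(2) i fx unfolding code_def by auto
        have "y \<in> q" "y' \<in> q" using stepq[OF qQ x(1) y(1)] stepq[OF qQ x(3) y'(1)] by auto
        then have "y = y'" using inj y y' unfolding inj_on_def by metis
        then have "x = x'" using sym_invD(3)[OF f y(1)] y' by simp
        then show "i = i'" using x by simp
      qed
    qed
  qed
  define h where "h x = (cls s x, to_nat_on (cls s x) x)" for x
  define g where "g p = from_nat_into (fst p) (snd p)" for p :: "'x set \<times> nat"
  have m: "minv g h (mcar Q code) X"
    unfolding minv_def
  proof (intro conjI ballI)
    fix p assume p: "p \<in> mcar Q code"
    then have q: "fst p \<in> Q" "snd p \<in> to_nat_on (fst p) ` (fst p)" unfolding mcar_def code_def by auto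
    then obtain x where x: "x \<in> fst p" "snd p = to_nat_on (fst p) x" by auto
    have gp: "g p = x" unfolding g_def using x Qc[OF q(1)] by simp
    show "g p \<in> X" using gp x QX[OF q(1)] by auto
    have "cls s x = fst p" using clsQ[OF q(1) x(1)] by simp
    then show "h (g p) = p" using gp x unfolding h_def by (simp add: prod_eq_iff)
  next
    fix x assume x: "x \<in> X"
    have q: "cls s x \<in> Q" using x unfolding Q_def by auto
    have xm: "x \<in> cls s x" by (rule cls_mem)
    show "h x \<in> mcar Q code" using q xm unfolding h_def mcar_def code_def by auto
    show "g (h x) = x" unfolding g_def h_def using Qc[OF q] xm by simp
  qed
  have conj: "conjm g h X (mmap Q code n) = s n" for n
  proof
    fix x show "conjm g h X (mmap Q code n) x = s n x"
    proof (cases "x \<in> X")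
      case True
      let ?q = "cls s x"
      have q: "?q \<in> Q" using True unfolding Q_def by auto
      have xm: "x \<in> ?q" by (rule cls_mem)
      have hm: "h x \<in> mcar Q code" using m True unfolding minv_def by blast
      have fi: "from_nat_into ?q (to_nat_on ?q x) = x" using Qc[OF q] xm by simp
      have ti: "to_nat_on ?q x \<in> to_nat_on ?q ` ?q" using xm by simp
      show ?thesis
      proof (cases "s n x")
        case None
        then show ?thesis using True hm fi ti unfolding conjm_def mmap_def h_def code_def by simp
      next
        case (Some y)
        have yq: "y \<in> ?q" using stepq[OF q xm Some] .
        have "from_nat_into ?q (to_nat_on ?q y) = y" using Qc[OF q] yq by simp
        then show ?thesis using True hm fi ti Some unfolding conjm_def mmap_def h_def code_def
          by (simp add: g_def)
      qed
    next
      case False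
      have f: "s n \<in> sym_inv X" using st unfolding struct_def by blast
      have "s n x = None" using False sym_invD(1)[OF f, of x] by (cases "s n x") auto
      then show ?thesis using False unfolding conjm_def by simp
    qed
  qed
  define PP where "PP = (UNIV :: nat set set)"
  have PPinf: "infinite PP" unfolding PP_def by (rule PP_inf)
  have codeQ: "|code ` Q| \<le>o |PP|"
  proof -
    have "inj_on enc (code ` Q) \<and> enc ` (code ` Q) \<subseteq> PP"
      using inj_on_subset[OF enc_inj] unfolding PP_def by simp
    then show ?thesis using card_of_ordLeq by blast
  qed
  define F where "F k = {q \<in> Q. code q = k}" for k
  have QF: "Q = (\<Union>k\<in>code ` Q. F k)" unfolding F_def by auto
  have QXc: "|Q| \<le>o |X|" unfolding Q_def by (rule card_of_image)
  obtain k0 where k0: "k0 \<in> code ` Q" "|PP| <o |F k0|"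
  proof (rule ccontr)
    assume "\<not> thesis"
    then have le: "\<forall>k\<in>code ` Q. |F k| \<le>o |PP|"
      using that ordLess_or_ordLeq[OF card_of_Well_order card_of_Well_order] by blast
    have "|\<Union>k\<in>code ` Q. F k| \<le>o |PP|"
      using card_of_UNION_ordLeq_infinite[OF PPinf codeQ le] .
    then have QP: "|Q| \<le>o |PP|" using QF by simp
    have XQ: "X = (\<Union>q\<in>Q. q)"
    proof
      show "X \<subseteq> (\<Union>q\<in>Q. q)" unfolding Q_def using cls_mem[of _ s] by auto
      show "(\<Union>q\<in>Q. q) \<subseteq> X" using QX by auto
    qed
    have "|\<Union>q\<in>Q. q| \<le>o |PP|"
      apply (rule card_of_UNION_ordLeq_infinite[OF PPinf QP])
      by (intro ballI countable_le_infinite[OF Qc PPinf])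
    then have "|X| \<le>o |PP|" using XQ by simp
    then show False using Xbig not_ordLess_ordLeq unfolding PP_def by blast
  qed
  define Fin where "Fin = {k \<in> code ` Q. finite (F k)}"
  define J where "J = code ` Q - Fin"
  define U where "U = (\<Union>k\<in>Fin. F k)"
  define Bk where "Bk k = (if k = k0 then F k0 \<union> U else F k)" for k
  have k0inf: "infinite (F k0)" using card_of_ordLeq_infinite[OF ordLess_imp_ordLeq[OF k0(2)] PPinf] .
  have k0J: "k0 \<in> J" using k0 k0inf unfolding J_def Fin_def by auto
  have FQ: "F k \<subseteq> Q" for k unfolding F_def by auto
  have BkQ: "Bk k \<subseteq> Q" for k unfolding Bk_def U_def using FQ by auto
  have cover: "\<Union>(Bk ` J) = Q"
  proof
    show "\<Union>(Bk ` J) \<subseteq> Q" using BkQ by blast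
    show "Q \<subseteq> \<Union>(Bk ` J)"
    proof
      fix q assume q: "q \<in> Q"
      show "q \<in> \<Union>(Bk ` J)"
      proof (cases "code q \<in> Fin")
        case True
        then have "q \<in> U" using q unfolding U_def F_def by auto
        then show ?thesis using k0J unfolding Bk_def by auto
      next
        case False
        then have "code q \<in> J" using q unfolding J_def by auto
        moreover have "q \<in> F (code q)" using q unfolding F_def by auto
        then have "q \<in> Bk (code q)" unfolding Bk_def by auto
        ultimately show ?thesis by blast
      qed
    qed
  qed
  have disj: "\<forall>i\<in>J. \<forall>j\<in>J. i \<noteq> j \<longrightarrow> Bk i \<inter> Bk j = {}"
  proof (intro ballI impI)
    fix i j assume ij: "i \<in> J" "j \<in> J" "i \<noteq> j"
    have Bc: "code q \<in> Fin \<or> code q = k" if "q \<in> Bk k" for q k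
      using that unfolding Bk_def U_def F_def by (auto split: if_splits)
    have Bc2: "code q = k" if "q \<in> Bk k" "k \<in> J" "k \<noteq> k0" for q k
      using that unfolding Bk_def F_def by auto
    show "Bk i \<inter> Bk j = {}"
    proof (rule ccontr)
      assume "Bk i \<inter> Bk j \<noteq> {}"
      then obtain q where q: "q \<in> Bk i" "q \<in> Bk j" by blast
      show False
      proof (cases "i = k0")
        case True
        then have "j \<noteq> k0" using ij by simp
        then have "code q = j" using Bc2 q(2) ij(2) by simp
        then have "code q \<notin> Fin" using ij(2) unfolding J_def by simp
        then have "code q = i" using Bc[OF q(1)] by simp
        then show False using ij \<open>code q = j\<close> by simp
      next
        case False
        then have "code q = i" using Bc2 q(1) ij(1) by simp
        then have nf: "code q \<notin> Fin" using ij(1) unfolding J_def by simp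
        then have "code q = j" using Bc[OF q(2)] by simp
        then show False using ij \<open>code q = i\<close> by simp
      qed
    qed
  qed
  have vQ: "\<forall>i\<in>Q. valid (code i)" using valid by blast
  have realB: "realizes A w (mcar (Bk j) code) (mmap (Bk j) code)" if jJ: "j \<in> J" for j
  proof -
    have jQ: "j \<in> code ` Q" and jF: "infinite (F j)" using jJ unfolding J_def Fin_def by auto
    have KI: "F j \<subseteq> Bk j" unfolding Bk_def by auto
    have Kc: "\<forall>i\<in>F j. code i = j" unfolding F_def by auto
    have KIo: "|F j| =o |Bk j|"
    proof (cases "j = k0")
      case True
      have "|U| \<le>o |PP|"
        unfolding U_def
        apply (rule card_of_UNION_ordLeq_infinite[OF PPinf])
        using ordLeq_transitive[OF card_of_mono1[of Fin "code ` Q"] codeQ] apply (simp add: Fin_def)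
        using fin_le_inf[OF _ PPinf] unfolding Fin_def by blast
      then have "|U| \<le>o |F k0|" using ordLeq_transitive[OF _ ordLess_imp_ordLeq[OF k0(2)]] by blast
      then have "|F k0 \<union> U| \<le>o |F k0|" using un_le[OF k0inf ordLeq_refl[OF card_of_Card_order]] by blast
      then have "|Bk j| \<le>o |F j|" using True unfolding Bk_def by simp
      moreover have "|F j| \<le>o |Bk j|" using card_of_mono1[OF KI] .
      ultimately show ?thesis using ordIso_iff_ordLeq by blast
    next
      case False
      then show ?thesis unfolding Bk_def by (simp add: card_of_refl)
    qed
    have Iinf: "infinite (Bk j)" using jF KI finite_subset by blast
    have IY: "|Bk j| \<le>o |Y|"
      using ordLeq_transitive[OF card_of_mono1[OF BkQ] ordLeq_transitive[OF QXc XY]] .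
    have val: "\<forall>i\<in>Bk j. valid (code i) \<and> fst (code i) \<noteq> {}" using valid BkQ by blast
    show ?thesis using absorb[OF rY Yinf cA val KI Kc KIo Iinf IY] .
  qed
  have "realizes A w (mcar Q code) (mmap Q code)"
    using model_glue[OF cover disj vQ] realB by blast
  from transfer_real[OF m this] show "realizes A w X s" using conj by simp
qed



theorem corollary2p3:
  fixes X :: "'x set" and Y :: "'y set"
  assumes "infinite X" and "infinite Y"
  shows "((card_of X, card_of Y) \<in> ordLess \<longrightarrow>
            (\<forall>(A :: 'c set) w. countable A \<longrightarrow> universal_for X A w \<longrightarrow> universal_for Y A w))
       \<and> ((card_of X, card_of Y) \<in> ordLess \<and> (card_of (UNIV :: nat set set), card_of X) \<in> ordLess \<longrightarrow>
            (\<forall>(A :: 'c set) w. countable A \<longrightarrow> universal_for Y A w \<longrightarrow> universal_for X A w))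
       \<and> ((card_of (UNIV :: nat set set), card_of X) \<in> ordLess \<and> (card_of X, card_of Y) \<in> ordLeq \<longrightarrow>
            (\<forall>(A :: 'c set) w. countable A \<longrightarrow> (universal_for X A w \<longleftrightarrow> universal_for Y A w)))"
proof (intro conjI impI allI)
  fix A :: "'c set" and w
  assume h: "|X| <o |Y|" "countable A" "universal_for X A w"
  then have w: "\<forall>n. w n \<in> lists A \<and> w n \<noteq> []" and r: "allreal A w X" unfolding universal_alt by simp_all
  have "allreal A w Y" using part1[OF assms(1) ordLess_imp_ordLeq[OF h(1)] r] .
  then show "universal_for Y A w" unfolding universal_alt using w by simp
next
  fix A :: "'c set" and w
  assume h: "|X| <o |Y| \<and> |UNIV :: nat set set| <o |X|" "countable A" "universal_for Y A w"
  then have w: "\<forall>n. w n \<in> lists A \<and> w n \<noteq> []" and r: "allreal A w Y" unfolding universal_alt by simp_all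
  have "allreal A w X" using part2[OF conjunct2[OF h(1)] ordLess_imp_ordLeq[OF conjunct1[OF h(1)]] r h(2)] .
  then show "universal_for X A w" unfolding universal_alt using w by simp
next
  fix A :: "'c set" and w
  assume h: "|UNIV :: nat set set| <o |X| \<and> |X| \<le>o |Y|" "countable A"
  show "universal_for X A w \<longleftrightarrow> universal_for Y A w"
  proof
    assume "universal_for X A w"
    then have w: "\<forall>n. w n \<in> lists A \<and> w n \<noteq> []" and r: "allreal A w X" unfolding universal_alt by simp_all
    have "allreal A w Y" using part1[OF assms(1) conjunct2[OF h(1)] r] .
    then show "universal_for Y A w" unfolding universal_alt using w by simp
  next
    assume "universal_for Y A w"
    then have w: "\<forall>n. w n \<in> lists A \<and> w n \<noteq> []" and r: "allreal A w Y" unfolding universal_alt by simp_all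
    have "allreal A w X" using part2[OF conjunct1[OF h(1)] conjunct2[OF h(1)] r h(2)] .
    then show "universal_for X A w" unfolding universal_alt using w by simp
  qed
qed

end
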